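(* Let $q\ge2$ be an integer, $1-\frac1{2q}<\gamma<1$, $p\in\{0,\dots,q-2\}$, and $a,b,c,d\ge0$ integers with $a+b=c+d=q-1-p$. Then there is a constant $C$ such that for all $N\ge1$, $$N^{4q-4}\sum_{i,i',k,k'=0}^{N-1}\langle\mathbf 1_{\Delta i},\mathbf 1_{\Delta i'}\rangle^{p+1}_{\mathcal H^\gamma}\langle\mathbf 1_{\Delta k},\mathbf 1_{\Delta k'}\rangle^{p+1}_{\mathcal H^\gamma}\langle\mathbf 1_{\Delta i},\mathbf 1_{\Delta k}\rangle^{a}_{\mathcal H^\gamma}\langle\mathbf 1_{\Delta i},\mathbf 1_{\Delta k'}\rangle^{b}_{\mathcal H^\gamma}\langle\mathbf 1_{\Delta i'},\mathbf 1_{\Delta k}\rangle^{c}_{\mathcal H^\gamma}\langle\mathbf 1_{\Delta i'},\mathbf 1_{\Delta k'}\rangle^{d}_{\mathcal H^\gamma}\le C.$$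
   Context: $\mathcal H^\gamma$ is the closure of step functions on $[0,1]$ under $\langle \mathbf 1_{[0,s_1]},\mathbf 1_{[0,s_2]}\rangle_{\mathcal H^\gamma}=\frac12(s_1^{2\gamma}+s_2^{2\gamma}-|s_1-s_2|^{2\gamma})$. $\Delta i=[\frac iN,\frac{i+1}N]$, so $\langle\mathbf 1_{\Delta i},\mathbf 1_{\Delta i'}\rangle_{\mathcal H^\gamma}=\frac12N^{-2\gamma}(|i-i'+1|^{2\gamma}+|i-i'-1|^{2\gamma}-2|i-i'|^{2\gamma})$. *)

theory Defs
  imports Complex_Main
begin

text \<open>Inner product in H^gamma of the indicators of Delta i = [i/N,(i+1)/N] and Delta i'.\<close>
definition fbm_ip :: "real \<Rightarrow> nat \<Rightarrow> int \<Rightarrow> int \<Rightarrow> real" where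
  "fbm_ip \<gamma> N i i' = (1/2) * (real N) powr (-2*\<gamma>) *
     (\<bar>real_of_int (i - i' + 1)\<bar> powr (2*\<gamma>) + \<bar>real_of_int (i - i' - 1)\<bar> powr (2*\<gamma>)
      - 2 * \<bar>real_of_int (i - i')\<bar> powr (2*\<gamma>))"

end

theory Submission imports Defs begin

lemma mvt_powr:
  fixes x y e :: real assumes "0 < x" "x < y"
  shows "\<exists>z. x < z \<and> z < y \<and> y powr e - x powr e = (y - x) * (e * z powr (e-1))"
proof -
  have "\<And>t. x \<le> t \<Longrightarrow> t \<le> y \<Longrightarrow> DERIV (\<lambda>t. t powr e) t :> e * t powr (e-1)"
    using assms by (intro has_real_derivative_powr) auto
  from MVT2[OF assms(2) this] show ?thesis by blast
qed

definition rho :: "real \<Rightarrow> int \<Rightarrow> real" where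
 "rho r n = (1/2) * (\<bar>real_of_int (n+1)\<bar> powr r + \<bar>real_of_int (n-1)\<bar> powr r - 2*\<bar>real_of_int n\<bar> powr r)"

lemma fbm_rho: "fbm_ip g N i j = real N powr (-2*g) * rho (2*g) (i-j)"
  unfolding fbm_ip_def rho_def by (simp add: algebra_simps)

lemma rho_neg: "rho r (-n) = rho r n"
  unfolding rho_def by (simp add: abs_minus_commute add.commute)

lemma rho_big:
  fixes x r :: real assumes "2 \<le> x" "1 < r" "r < 2"
  shows "\<bar>(1/2) * ((x+1) powr r + (x-1) powr r - 2 * x powr r)\<bar> \<le> 6 * (1+x) powr (-(2-r))"
proof -
  obtain z1 where z1: "x < z1" "z1 < x+1" "(x+1) powr r - x powr r = ((x+1) - x) * (r * z1 powr (r-1))"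
    using mvt_powr[of x "x+1" r] assms by auto
  obtain z2 where z2: "x-1 < z2" "z2 < x" "x powr r - (x-1) powr r = (x - (x-1)) * (r * z2 powr (r-1))"
    using mvt_powr[of "x-1" x r] assms by auto
  have le: "z2 powr (r-1) \<le> z1 powr (r-1)" using z1 z2 assms by (intro powr_mono2) auto
  have e: "(1/2) * ((x+1) powr r + (x-1) powr r - 2 * x powr r) = (1/2) * r * (z1 powr (r-1) - z2 powr (r-1))"
    using z1(3) z2(3) by (simp add: algebra_simps)
  have nn: "0 \<le> (1/2) * r * (z1 powr (r-1) - z2 powr (r-1))" using le assms by simp
  have u1: "z1 powr (r-1) \<le> (x+1) powr (r-1)" using z1 assms by (intro powr_mono2) auto
  have u2: "(x-1) powr (r-1) \<le> z2 powr (r-1)" using z2 assms by (intro powr_mono2) auto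
  obtain z3 where z3: "x-1 < z3" "z3 < x+1" "(x+1) powr (r-1) - (x-1) powr (r-1) = ((x+1) - (x-1)) * ((r-1) * z3 powr (r-1-1))"
    using mvt_powr[of "x-1" "x+1" "r-1"] assms by auto
  have u3: "z3 powr (r-1-1) \<le> (x-1) powr (r-1-1)" using z3 assms by (intro powr_mono2') auto
  have "(x-1) powr (r-1-1) = (x-1) powr (-(2-r))" by (simp add: algebra_simps)
  also have "\<dots> \<le> ((1+x)/3) powr (-(2-r))" using assms by (intro powr_mono2') auto
  also have "\<dots> = (1+x) powr (-(2-r)) * 3 powr (2-r)" 
    by (simp add: powr_divide powr_minus divide_simps flip: powr_add)
  also have "\<dots> \<le> (1+x) powr (-(2-r)) * 3"
  proof -
    have "3 powr (2-r) \<le> 3 powr (1::real)" using assms by (intro powr_mono) auto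
    then show ?thesis by (intro mult_left_mono) auto
  qed
  finally have u4: "z3 powr (r-1-1) \<le> (1+x) powr (-(2-r)) * 3" using u3 by linarith
  have "(1/2) * r * (z1 powr (r-1) - z2 powr (r-1)) \<le> (1/2) * r * ((x+1) powr (r-1) - (x-1) powr (r-1))"
    using u1 u2 assms by (intro mult_left_mono) auto
  also have "\<dots> = r * ((r-1) * z3 powr (r-1-1))" using z3(3) by simp
  also have "\<dots> \<le> 2 * (1 * ((1+x) powr (-(2-r)) * 3))"
    using assms u4 by (intro mult_mono) (auto intro!: mult_mono)
  finally show ?thesis using e nn by simp
qed

lemma rho_nonneg_bound:
  assumes "1 < r" "r < 2" "0 \<le> n"
  shows "\<bar>rho r n\<bar> \<le> 10 * (1+\<bar>real_of_int n\<bar>) powr (-(2-r))"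
proof -
  have lowb: "1/2 \<le> (1+\<bar>real_of_int n\<bar>) powr (-(2-r))" if "n \<le> 1"
  proof -
    have "(2::real) powr (-1) \<le> 2 powr (-(2-r))" using assms by (intro powr_mono) auto
    also have "\<dots> \<le> (1+\<bar>real_of_int n\<bar>) powr (-(2-r))" using assms that by (intro powr_mono2') auto
    finally show ?thesis by (simp add: powr_minus)
  qed
  consider "n = 0" | "n = 1" | "2 \<le> n" using assms by linarith
  then show ?thesis
  proof cases
    case 1
    then show ?thesis using lowb by (simp add: rho_def)
  next
    case 2
    have "(2::real) powr r \<le> 2 powr 2" using assms by (intro powr_mono) auto
    moreover have "(2::real) powr 1 \<le> 2 powr r" using assms by (intro powr_mono) auto
    ultimately have "\<bar>rho r n\<bar> \<le> 2" using 2 by (simp add: rho_def)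
    then show ?thesis using lowb 2 by linarith
  next
    case 3
    define x where "x = real_of_int n"
    have x2: "2 \<le> x" using 3 x_def by simp
    have "rho r n = (1/2) * ((x+1) powr r + (x-1) powr r - 2 * x powr r)"
      unfolding rho_def x_def using 3 by simp
    then have "\<bar>rho r n\<bar> \<le> 6 * (1+x) powr (-(2-r))" using rho_big[OF x2 assms(1,2)] by simp
    also have "\<dots> \<le> 10 * (1+x) powr (-(2-r))" by simp
    finally show ?thesis using x_def x2 by simp
  qed
qed

lemma rho_bound:
  assumes "1 < r" "r < 2"
  shows "\<bar>rho r n\<bar> \<le> 10 * (1+\<bar>real_of_int n\<bar>) powr (-(2-r))"
proof (cases "0 \<le> n")
  case True then show ?thesis using rho_nonneg_bound assms by blast
next
  case False
  then have "\<bar>rho r (-n)\<bar> \<le> 10 * (1+\<bar>real_of_int (-n)\<bar>) powr (-(2-r))"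
    using rho_nonneg_bound[of r "-n"] assms by simp
  then show ?thesis by (simp add: rho_neg)
qed

lemma sum_G_bound:
  fixes s :: real assumes "0 < s" "s < 1"
  shows "(\<Sum>j<n. (1+real j) powr (-s)) \<le> real n powr (1-s)/(1-s)"
proof (induction n)
  case 0 then show ?case by simp
next
  case (Suc n)
  have step: "(1 + real n) powr (-s) \<le> (real (Suc n) powr (1-s) - real n powr (1-s))/(1-s)"
  proof (cases "n = 0")
    case True then show ?thesis using assms by (simp add: divide_simps)
  next
    case False
    obtain z where z: "real n < z" "z < real n + 1"
      "(real n + 1) powr (1-s) - real n powr (1-s) = ((real n + 1) - real n) * ((1-s) * z powr (1-s-1))"
      using mvt_powr[of "real n" "real n + 1" "1-s"] False by auto
    have "(1 + real n) powr (-s) \<le> z powr (-s)" using z False assms by (intro powr_mono2') auto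
    then have "(1-s) * (1 + real n) powr (-s) \<le> (1-s) * z powr (-s)" using assms by (intro mult_left_mono) auto
    then show ?thesis using z assms by (simp add: divide_simps algebra_simps)
  qed
  show ?case using Suc step by (simp add: diff_divide_distrib)
qed

lemma row_bound:
  fixes s :: real assumes "0 < s" "s < 1" "x < N"
  shows "(\<Sum>y<N. (1+\<bar>real_of_int (int y - int x)\<bar>) powr (-s)) \<le> 2*(real N powr (1-s)/(1-s))"
proof -
  define G where "G = (\<lambda>j::nat. (1+real j) powr (-s))"
  have G0: "0 \<le> G j" for j unfolding G_def by simp
  have pt: "(1+\<bar>real_of_int (int y - int x)\<bar>) powr (-s) \<le>
      (if x \<le> y then G (y-x) else 0) + (if y \<le> x then G (x-y) else 0)" for y
    using G0 by (cases "x \<le> y") (auto simp: G_def of_nat_diff)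
  have "(\<Sum>y<N. (1+\<bar>real_of_int (int y - int x)\<bar>) powr (-s)) \<le>
      (\<Sum>y<N. (if x \<le> y then G (y-x) else 0)) + (\<Sum>y<N. (if y \<le> x then G (x-y) else 0))"
    unfolding sum.distrib[symmetric] by (intro sum_mono pt)
  also have "(\<Sum>y<N. (if x \<le> y then G (y-x) else 0)) = (\<Sum>y\<in>{x..<N}. G (y-x))"
    by (rule sum.mono_neutral_cong_right) auto
  also have "\<dots> = sum G ((\<lambda>y. y - x) ` {x..<N})"
    by (subst sum.reindex) (auto simp: inj_on_def)
  also have "\<dots> \<le> sum G {..<N}"
    using G0 by (intro sum_mono2) auto
  also have "(\<Sum>y<N. (if y \<le> x then G (x-y) else 0)) = (\<Sum>y\<in>{..x}. G (x-y))"
    using assms by (intro sum.mono_neutral_cong_right) auto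
  also have "\<dots> = sum G ((\<lambda>y. x - y) ` {..x})"
    by (subst sum.reindex) (auto simp: inj_on_def)
  also have "\<dots> \<le> sum G {..<N}"
    using G0 assms by (intro sum_mono2) auto
  finally have "(\<Sum>y<N. (1+\<bar>real_of_int (int y - int x)\<bar>) powr (-s)) \<le> 2 * sum G {..<N}" by simp
  also have "\<dots> \<le> 2*(real N powr (1-s)/(1-s))"
    using sum_G_bound[OF assms(1,2), of N] unfolding G_def by (intro mult_left_mono) auto
  finally show ?thesis .
qed

lemma comb:
  fixes A1 A2 B1 B2 C1 C2 :: real
  assumes "0 \<le> A1" "0 \<le> A2" "0 \<le> B1" "0 \<le> B2" "0 \<le> C1" "0 \<le> C2"
    and "a + b = m" "c + d = m" "P + m = q"
  shows "A1^P * A2^P * B1^a * B2^b * C1^c * C2^d \<le> (A1*A2)^q + (B1^q + B2^q)*(C1^q+C2^q)"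
proof -
  define X where "X = max B1 B2"
  define Y where "Y = max C1 C2"
  have X0: "0 \<le> X" "0 \<le> Y" using assms X_def Y_def by auto
  have "B1^a * B2^b \<le> X^a * X^b" using assms unfolding X_def
    by (intro mult_mono power_mono) auto
  also have "\<dots> = X^m" using assms by (simp add: power_add[symmetric])
  finally have hB: "B1^a * B2^b \<le> X^m" .
  have "C1^c * C2^d \<le> Y^c * Y^d" using assms unfolding Y_def
    by (intro mult_mono power_mono) auto
  also have "\<dots> = Y^m" using assms by (simp add: power_add[symmetric])
  finally have hC: "C1^c * C2^d \<le> Y^m" .
  define M where "M = max (A1*A2) (X*Y)"
  have "A1^P * A2^P * B1^a * B2^b * C1^c * C2^d = (A1*A2)^P * ((B1^a * B2^b) * (C1^c * C2^d))"
    by (simp add: power_mult_distrib mult_ac)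
  also have "\<dots> \<le> (A1*A2)^P * (X^m * Y^m)"
    using hB hC assms X0 by (intro mult_left_mono mult_mono) auto
  also have "\<dots> = (A1*A2)^P * (X*Y)^m" by (simp add: power_mult_distrib)
  also have "\<dots> \<le> M^P * M^m" unfolding M_def using assms X0
    by (intro mult_mono power_mono) (auto simp: le_max_iff_disj)
  also have "\<dots> = M^q" using assms by (simp add: power_add[symmetric])
  also have "\<dots> \<le> (A1*A2)^q + (X*Y)^q" unfolding M_def using assms X0
    by (cases "A1*A2 \<le> X*Y") (auto simp: max_def)
  also have "(X*Y)^q = X^q * Y^q" by (simp add: power_mult_distrib)
  also have "\<dots> \<le> (B1^q + B2^q)*(C1^q+C2^q)" using assms unfolding X_def Y_def
    by (intro mult_mono) (auto simp: max_def)
  finally show ?thesis by simp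
qed

lemma prod_bound:
  fixes L K x1 x2 x3 x4 x5 x6 w1 w2 w3 w4 w5 w6 :: real
  assumes "0 \<le> L" "\<bar>x1\<bar> \<le> K*w1" "\<bar>x2\<bar> \<le> K*w2" "\<bar>x3\<bar> \<le> K*w3" "\<bar>x4\<bar> \<le> K*w4" "\<bar>x5\<bar> \<le> K*w5" "\<bar>x6\<bar> \<le> K*w6"
  shows "\<bar>(L*x1)^P*(L*x2)^P*(L*x3)^a*(L*x4)^b*(L*x5)^c*(L*x6)^d\<bar> \<le>
    (L*K)^(P+P+a+b+c+d) * (w1^P*w2^P*w3^a*w4^b*w5^c*w6^d)"
proof -
  have nn: "0 \<le> L*(K*w1)" "0 \<le> L*(K*w2)" "0 \<le> L*(K*w3)" "0 \<le> L*(K*w4)" "0 \<le> L*(K*w5)" "0 \<le> L*(K*w6)"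
    using assms by (auto intro!: mult_nonneg_nonneg order_trans[OF abs_ge_zero])
  have h: "\<bar>L*x\<bar>^n \<le> (L*(K*w))^n" if "\<bar>x\<bar> \<le> K*w" for x w :: real and n
    using that assms(1) by (intro power_mono) (auto simp: abs_mult intro: mult_left_mono)
  have "\<bar>(L*x1)^P*(L*x2)^P*(L*x3)^a*(L*x4)^b*(L*x5)^c*(L*x6)^d\<bar> =
     \<bar>L*x1\<bar>^P*\<bar>L*x2\<bar>^P*\<bar>L*x3\<bar>^a*\<bar>L*x4\<bar>^b*\<bar>L*x5\<bar>^c*\<bar>L*x6\<bar>^d"
    by (simp add: abs_mult power_abs)
  also have "\<dots> \<le> (L*(K*w1))^P*(L*(K*w2))^P*(L*(K*w3))^a*(L*(K*w4))^b*(L*(K*w5))^c*(L*(K*w6))^d"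
    using nn by (intro mult_mono h assms(2-7)) (auto intro!: mult_nonneg_nonneg zero_le_power)
  also have "\<dots> = (L*K)^(P+P+a+b+c+d) * (w1^P*w2^P*w3^a*w4^b*w5^c*w6^d)"
    by (simp add: power_mult_distrib power_add mult_ac)
  finally show ?thesis .
qed

lemma sum4:
  fixes g :: "nat \<Rightarrow> nat \<Rightarrow> real"
  assumes g0: "\<And>x y. 0 \<le> g x y" and sym: "\<And>x y. g x y = g y x"
    and row: "\<And>x. x < N \<Longrightarrow> (\<Sum>y<N. g x y) \<le> R"
  shows "(\<Sum>i<N. \<Sum>i'<N. \<Sum>k<N. \<Sum>k'<N. g i i' * g k k' + (g i k + g i k') * (g i' k + g i' k'))
          \<le> 5 * (real N^2 * R^2)"
proof (cases "N = 0")
  case True then show ?thesis by simp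
next
  case False
  have R0: "0 \<le> R" using row[of 0] False g0 by (meson order_trans sum_nonneg neq0_conv)
  have col: "(\<Sum>x<N. g x y) \<le> R" if "y < N" for y using row[OF that] sym by simp
  have S2: "(\<Sum>i<N. \<Sum>j<N. g i j) \<le> real N * R"
  proof -
    have "(\<Sum>i<N. \<Sum>j<N. g i j) \<le> (\<Sum>i<N. R)" by (intro sum_mono row) auto
    then show ?thesis by simp
  qed
  have S20: "0 \<le> (\<Sum>i<N. \<Sum>j<N. g i j)" by (intro sum_nonneg g0)
  have T1: "(\<Sum>i<N. \<Sum>i'<N. \<Sum>k<N. \<Sum>k'<N. g i i' * g k k') \<le> real N^2 * R^2"
  proof -
    have "(\<Sum>i<N. \<Sum>i'<N. \<Sum>k<N. \<Sum>k'<N. g i i' * g k k') = (\<Sum>i<N. \<Sum>i'<N. g i i' * (\<Sum>k<N. \<Sum>k'<N. g k k'))"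
      by (simp add: sum_distrib_left)
    also have "\<dots> = (\<Sum>i<N. \<Sum>i'<N. g i i') * (\<Sum>k<N. \<Sum>k'<N. g k k')"
      by (simp add: sum_distrib_right)
    also have "\<dots> \<le> (real N * R) * (real N * R)" using S2 S20 by (intro mult_mono) auto
    finally show ?thesis by (simp add: power2_eq_square mult_ac)
  qed
  have T3: "(\<Sum>i<N. \<Sum>i'<N. \<Sum>k<N. \<Sum>k'<N. g i k * g i' k') \<le> real N^2 * R^2"
  proof -
    have "(\<Sum>i<N. \<Sum>i'<N. \<Sum>k<N. \<Sum>k'<N. g i k * g i' k') = (\<Sum>i<N. \<Sum>i'<N. (\<Sum>k<N. g i k) * (\<Sum>k'<N. g i' k'))"
      by (simp add: sum_product)
    also have "\<dots> \<le> (\<Sum>i<N. \<Sum>i'<N. R * R)"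
      using row by (intro sum_mono mult_mono) (auto intro: sum_nonneg g0 R0)
    finally show ?thesis by (simp add: power2_eq_square mult_ac)
  qed
  have T4: "(\<Sum>i<N. \<Sum>i'<N. \<Sum>k<N. \<Sum>k'<N. g i k' * g i' k) \<le> real N^2 * R^2"
  proof -
    have "(\<Sum>i<N. \<Sum>i'<N. \<Sum>k<N. \<Sum>k'<N. g i k' * g i' k) = (\<Sum>i<N. \<Sum>i'<N. \<Sum>k'<N. \<Sum>k<N. g i k' * g i' k)"
      by (rule sum.cong[OF refl], rule sum.cong[OF refl], rule sum.swap)
    also have "\<dots> = (\<Sum>i<N. \<Sum>i'<N. (\<Sum>k'<N. g i k') * (\<Sum>k<N. g i' k))"
      by (simp add: sum_product)
    also have "\<dots> \<le> (\<Sum>i<N. \<Sum>i'<N. R * R)"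
      using row by (intro sum_mono mult_mono) (auto intro: sum_nonneg g0 R0)
    finally show ?thesis by (simp add: power2_eq_square mult_ac)
  qed
  have T2: "(\<Sum>i<N. \<Sum>i'<N. \<Sum>k<N. \<Sum>k'<N. g i k * g i' k) \<le> real N^2 * R^2"
  proof -
    have "(\<Sum>i<N. \<Sum>i'<N. \<Sum>k<N. \<Sum>k'<N. g i k * g i' k) = (\<Sum>i<N. \<Sum>i'<N. \<Sum>k<N. real N * (g i k * g i' k))"
      by simp
    also have "\<dots> = (\<Sum>i<N. \<Sum>k<N. \<Sum>i'<N. real N * (g i k * g i' k))"
      by (intro sum.cong refl sum.swap)
    also have "\<dots> = (\<Sum>i<N. \<Sum>k<N. real N * g i k * (\<Sum>i'<N. g i' k))"
      by (simp add: sum_distrib_left mult_ac)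
    also have "\<dots> \<le> (\<Sum>i<N. \<Sum>k<N. real N * g i k * R)"
      using col g0 by (intro sum_mono mult_left_mono) auto
    also have "\<dots> = real N * R * (\<Sum>i<N. \<Sum>k<N. g i k)"
      by (simp add: sum_distrib_left mult_ac)
    also have "\<dots> \<le> real N * R * (real N * R)" using S2 R0 by (intro mult_left_mono) auto
    finally show ?thesis by (simp add: power2_eq_square mult_ac)
  qed
  have T5: "(\<Sum>i<N. \<Sum>i'<N. \<Sum>k<N. \<Sum>k'<N. g i k' * g i' k') \<le> real N^2 * R^2"
  proof -
    have "(\<Sum>i<N. \<Sum>i'<N. \<Sum>k<N. \<Sum>k'<N. g i k' * g i' k') = (\<Sum>i<N. \<Sum>i'<N. \<Sum>k'<N. real N * (g i k' * g i' k'))"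
      by (simp add: sum_distrib_left)
    also have "\<dots> = (\<Sum>i<N. \<Sum>k'<N. \<Sum>i'<N. real N * (g i k' * g i' k'))"
      by (intro sum.cong refl sum.swap)
    also have "\<dots> = (\<Sum>i<N. \<Sum>k<N. real N * g i k * (\<Sum>i'<N. g i' k))"
      by (simp add: sum_distrib_left mult_ac)
    also have "\<dots> \<le> (\<Sum>i<N. \<Sum>k<N. real N * g i k * R)"
      using col g0 by (intro sum_mono mult_left_mono) auto
    also have "\<dots> = real N * R * (\<Sum>i<N. \<Sum>k<N. g i k)"
      by (simp add: sum_distrib_left mult_ac)
    also have "\<dots> \<le> real N * R * (real N * R)" using S2 R0 by (intro mult_left_mono) auto
    finally show ?thesis by (simp add: power2_eq_square mult_ac)
  qed
  have "(\<Sum>i<N. \<Sum>i'<N. \<Sum>k<N. \<Sum>k'<N. g i i' * g k k' + (g i k + g i k') * (g i' k + g i' k')) =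
    (\<Sum>i<N. \<Sum>i'<N. \<Sum>k<N. \<Sum>k'<N. g i i' * g k k') + (\<Sum>i<N. \<Sum>i'<N. \<Sum>k<N. \<Sum>k'<N. g i k * g i' k)
    + (\<Sum>i<N. \<Sum>i'<N. \<Sum>k<N. \<Sum>k'<N. g i k * g i' k') + (\<Sum>i<N. \<Sum>i'<N. \<Sum>k<N. \<Sum>k'<N. g i k' * g i' k)
    + (\<Sum>i<N. \<Sum>i'<N. \<Sum>k<N. \<Sum>k'<N. g i k' * g i' k')"
    by (simp add: sum.distrib algebra_simps)
  then show ?thesis using T1 T2 T3 T4 T5 by linarith
qed

theorem mainTheorem8:
  fixes q p a b c d :: nat and \<gamma> :: real
  assumes "q \<ge> 2"
    and "1 - 1 / (2 * real q) < \<gamma>" and "\<gamma> < 1"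
    and "p \<le> q - 2"
    and "a + b = q - 1 - p" and "c + d = q - 1 - p"
  shows "\<exists>C::real. \<forall>N::nat. N \<ge> 1 \<longrightarrow>
    real N ^ (4*q - 4) *
      (\<Sum>i<N. \<Sum>i'<N. \<Sum>k<N. \<Sum>k'<N.
         fbm_ip \<gamma> N (int i) (int i') ^ (p+1) * fbm_ip \<gamma> N (int k) (int k') ^ (p+1) *
         fbm_ip \<gamma> N (int i) (int k) ^ a * fbm_ip \<gamma> N (int i) (int k') ^ b *
         fbm_ip \<gamma> N (int i') (int k) ^ c * fbm_ip \<gamma> N (int i') (int k') ^ d) \<le> C"
proof -
  define r where "r = 2*\<gamma>"
  define \<beta> where "\<beta> = 2 - r"
  define s where "s = real q * \<beta>"
  have q0: "0 < real q" using assms by simp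
  have "1 / (2 * real q) \<le> 1/4" using assms by (simp add: divide_simps)
  then have "3/4 < \<gamma>" using assms(2) by linarith
  then have r1: "1 < r" and r2: "r < 2" using assms r_def by auto
  have s0: "0 < s" unfolding s_def \<beta>_def using r2 q0 by simp
  have "real q * (1 - 1 / (2 * real q)) < real q * \<gamma>" using assms q0 by (intro mult_strict_left_mono) auto
  then have "real q - 1/2 < real q * \<gamma>" using q0 by (simp add: algebra_simps)
  then have s1: "s < 1" unfolding s_def \<beta>_def r_def by (simp add: algebra_simps)
  define m where "m = q - 1 - p"
  have ex: "(p+1) + m = q" using assms m_def by simp
  define C where "C = 5 * 10^(2*q) * (2/(1-s))^2"
  show ?thesis
  proof (intro exI[of _ C] allI impI)
    fix N :: nat assume N1: "N \<ge> 1"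
    have Npos: "0 < real N" using N1 by simp
    define L where "L = real N powr (-2*\<gamma>)"
    have L0: "0 \<le> L" unfolding L_def by simp
    define w where "w = (\<lambda>x y::nat. (1+\<bar>real_of_int (int x - int y)\<bar>) powr (-\<beta>))"
    define g where "g = (\<lambda>x y::nat. (1+\<bar>real_of_int (int x - int y)\<bar>) powr (-s))"
    have wq: "w x y ^ q = g x y" for x y
      unfolding w_def g_def s_def by (subst powr_power) (auto simp: algebra_simps)
    have w0: "0 \<le> w x y" for x y unfolding w_def by simp
    have rb: "\<bar>rho r (int x - int y)\<bar> \<le> 10 * w x y" for x y
      unfolding w_def \<beta>_def using rho_bound[OF r1 r2, of "int x - int y"] by simp
    define H where "H = (\<lambda>i i' k k'. g i i' * g k k' + (g i k + g i k') * (g i' k + g i' k'))"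
    define T where "T = (\<lambda>i i' k k'. fbm_ip \<gamma> N (int i) (int i') ^ (p+1) * fbm_ip \<gamma> N (int k) (int k') ^ (p+1) *
         fbm_ip \<gamma> N (int i) (int k) ^ a * fbm_ip \<gamma> N (int i) (int k') ^ b *
         fbm_ip \<gamma> N (int i') (int k) ^ c * fbm_ip \<gamma> N (int i') (int k') ^ d)"
    have pt: "T i i' k k' \<le> (L*10)^(2*q) * H i i' k k'" for i i' k k'
    proof -
      have e2: "(p+1)+(p+1)+a+b+c+d = 2*q" using ex assms m_def by simp
      have b1: "\<bar>T i i' k k'\<bar> \<le> (L*10)^((p+1)+(p+1)+a+b+c+d) *
          (w i i'^(p+1) * w k k'^(p+1) * w i k^a * w i k'^b * w i' k^c * w i' k'^d)"
        unfolding T_def fbm_rho r_def[symmetric] L_def[symmetric]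
        by (intro prod_bound L0 rb)
      have b2: "(w i i'^(p+1) * w k k'^(p+1) * w i k^a * w i k'^b * w i' k^c * w i' k'^d)
          \<le> (w i i' * w k k')^q + (w i k^q + w i k'^q) * (w i' k^q + w i' k'^q)"
        by (rule comb[OF w0 w0 w0 w0 w0 w0 _ _ ex]) (use assms m_def in auto)
      have b3: "(w i i' * w k k')^q + (w i k^q + w i k'^q) * (w i' k^q + w i' k'^q) = H i i' k k'"
        unfolding H_def by (simp only: power_mult_distrib wq)
      have b4: "(L*10)^(2*q) * (w i i'^(p+1) * w k k'^(p+1) * w i k^a * w i k'^b * w i' k^c * w i' k'^d)
           \<le> (L*10)^(2*q) * H i i' k k'"
        using b2 b3 L0 by (intro mult_left_mono) auto
      have "T i i' k k' \<le> \<bar>T i i' k k'\<bar>" by simp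
      then show ?thesis using b1 b4 unfolding e2 by linarith
    qed
    define R where "R = 2*(real N powr (1-s)/(1-s))"
    have S: "(\<Sum>i<N. \<Sum>i'<N. \<Sum>k<N. \<Sum>k'<N. H i i' k k') \<le> 5 * (real N^2 * R^2)"
      unfolding H_def
    proof (rule sum4)
      show "0 \<le> g x y" for x y unfolding g_def by simp
      show "g x y = g y x" for x y unfolding g_def by (simp add: abs_minus_commute)
      show "(\<Sum>y<N. g x y) \<le> R" if "x < N" for x
      proof -
        have "(\<Sum>y<N. g x y) = (\<Sum>y<N. (1+\<bar>real_of_int (int y - int x)\<bar>) powr (-s))"
          unfolding g_def by (simp add: abs_minus_commute)
        also have "\<dots> \<le> R" unfolding R_def using row_bound[OF s0 s1 that] .
        finally show ?thesis .
      qed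
    qed
    have "(\<Sum>i<N. \<Sum>i'<N. \<Sum>k<N. \<Sum>k'<N. T i i' k k') \<le> (\<Sum>i<N. \<Sum>i'<N. \<Sum>k<N. \<Sum>k'<N. (L*10)^(2*q) * H i i' k k')"
      by (intro sum_mono pt)
    also have "\<dots> = (L*10)^(2*q) * (\<Sum>i<N. \<Sum>i'<N. \<Sum>k<N. \<Sum>k'<N. H i i' k k')"
      by (simp add: sum_distrib_left)
    also have "\<dots> \<le> (L*10)^(2*q) * (5 * (real N^2 * R^2))"
      using S L0 by (intro mult_left_mono) auto
    finally have main: "(\<Sum>i<N. \<Sum>i'<N. \<Sum>k<N. \<Sum>k'<N. T i i' k k') \<le> (L*10)^(2*q) * (5 * (real N^2 * R^2))" .
    have key: "real N ^ (4*q-4) * L^(2*q) * real N^2 * (real N powr (1-s))^2 = 1"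
    proof -
      have k1: "real N ^ (4*q-4) = real N powr (real (4*q-4))" by (rule powr_realpow[symmetric, OF Npos])
      have k2: "L^(2*q) = real N powr (real (2*q) * (-2*\<gamma>))" unfolding L_def
        by (rule powr_power) (use Npos in simp)
      have k3: "real N^2 = real N powr (real (2::nat))" by (rule powr_realpow[symmetric, OF Npos])
      have k4: "(real N powr (1-s))^2 = real N powr (real (2::nat) * (1-s))"
        by (rule powr_power) (use Npos in simp)
      have "real N ^ (4*q-4) * L^(2*q) * real N^2 * (real N powr (1-s))^2
          = real N powr (real (4*q-4) + real (2*q) * (-2*\<gamma>) + real (2::nat) + real (2::nat)*(1-s))"
        unfolding k1 k2 k3 k4 by (simp only: powr_add)
      also have "real (4*q-4) + real (2*q) * (-2*\<gamma>) + real (2::nat) + real (2::nat)*(1-s) = 0"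
        using assms unfolding s_def \<beta>_def r_def by (simp add: of_nat_diff algebra_simps)
      finally show ?thesis using Npos by simp
    qed
    have "real N ^ (4*q-4) * (\<Sum>i<N. \<Sum>i'<N. \<Sum>k<N. \<Sum>k'<N. T i i' k k') \<le>
          real N ^ (4*q-4) * ((L*10)^(2*q) * (5 * (real N^2 * R^2)))"
      using main by (intro mult_left_mono) auto
    also have "\<dots> = 5 * 10^(2*q) * (2/(1-s))^2 * (real N ^ (4*q-4) * L^(2*q) * real N^2 * (real N powr (1-s))^2)"
      unfolding R_def by (simp add: power_mult_distrib power_divide mult_ac)
    also have "\<dots> = C" unfolding C_def key by simp
    finally show "real N ^ (4*q - 4) * (\<Sum>i<N. \<Sum>i'<N. \<Sum>k<N. \<Sum>k'<N. T i i' k k') \<le> C" .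
  qed
qed

end
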